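(* Let $\mathcal{A}=\{\alpha_1<\dots<\alpha_m\}\subset(0,1)$, $|\mathcal{A}|=m$. Let $(b_t)$ be base forecasts with $b_t\in\mathcal{K}$ and $(y_t)$ real outcomes with $|y_t-b_t^{\alpha}|\le R$ for all $\alpha\in\mathcal{A}$ and all $t$. Let $\ell_t(\theta)=\rho_{\mathcal{A}}(b_t+\theta,y_t)$. Let $\theta_1,\dots,\theta_T$ be the played offsets of MultiQT with constant delay $D\ge0$ and learning rate $\eta>0$ started from $\tilde\theta_1=\mathbf{0}$, and let $\mathcal{C}=\bigcap_{t=1}^{T+D+1}(\mathcal{K}-b_t)$. Then for every $\theta\in\mathcal{C}$, $$\mathrm{Regret}_T(\theta):=\frac1T\sum_{t=1}^T\ell_t(\theta_t)-\frac1T\sum_{t=1}^T\ell_t(\theta)\le\frac{R^2|\mathcal{A}|}{2\eta T}+2\eta|\mathcal{A}|(D+1).$$ In particular, for $\eta=\frac R2\sqrt{\frac{1}{(D+1)T}}$, $\mathrm{Regret}_T(\theta)\le\frac{2R|\mathcal{A}|\sqrt{D+1}}{\sqrt T}$.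
   Context: $\mathcal{K}=\{x\in\mathbb{R}^m:x_1\le\dots\le x_m\}$; $\Pi_C$ is Euclidean projection; $C-v=\{x-v:x\in C\}$. Quantile loss: $\rho_\alpha(\hat y,y)=\alpha|y-\hat y|$ if $y-\hat y\ge0$ and $(1-\alpha)|y-\hat y|$ otherwise; $\rho_{\mathcal{A}}(q,y)=\sum_{\alpha\in\mathcal{A}}\rho_\alpha(q^{\alpha},y)$. MultiQT with constant delay $D\ge0$: for $t=1,2,\dots$, $\theta_t=\Pi_{\mathcal{K}-b_t}(\tilde\theta_t)$, forecast $q_t=b_t+\theta_t$, $\mathrm{cov}_t^{\alpha}=\mathbb{1}\{y_t\le q_t^{\alpha}\}$, and $\tilde\theta_{t+1}^{\alpha}=\tilde\theta_t^{\alpha}-\eta(\mathrm{cov}_{t-D}^{\alpha}-\alpha)$ for $t>D$, $\tilde\theta_{t+1}=\tilde\theta_t$ for $t\le D$. *)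

theory Defs
  imports "HOL-Analysis.Analysis"
begin

text \<open>Coordinates of R^m are indexed by a finite linearly ordered type 'm
  (with CARD('m) = m); coordinate i corresponds to quantile level alpha i.\<close>

definition Kord :: "(real ^ ('m::{finite,linorder})) set" where
  "Kord = {x. \<forall>i j. i \<le> j \<longrightarrow> x $ i \<le> x $ j}"

definition shift_set :: "'a::ab_group_add set \<Rightarrow> 'a \<Rightarrow> 'a set" where
  "shift_set C v = (\<lambda>x. x - v) ` C"

definition rho :: "real \<Rightarrow> real \<Rightarrow> real \<Rightarrow> real" where
  "rho a yhat y = (if y - yhat \<ge> 0 then a * \<bar>y - yhat\<bar> else (1 - a) * \<bar>y - yhat\<bar>)"

definition rhoA :: "('m::{finite,linorder} \<Rightarrow> real) \<Rightarrow> real ^ ('m::{finite,linorder}) \<Rightarrow> real \<Rightarrow> real" where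
  "rhoA alpha q y = (\<Sum>i\<in>UNIV. rho (alpha i) (q $ i) y)"

definition play :: "(nat \<Rightarrow> real ^ ('m::{finite,linorder})) \<Rightarrow> nat \<Rightarrow> real ^ ('m::{finite,linorder}) \<Rightarrow> real ^ ('m::{finite,linorder})" where
  "play b t th = closest_point (shift_set Kord (b t)) th"

fun mqt_tilde :: "('m::{finite,linorder} \<Rightarrow> real) \<Rightarrow> real \<Rightarrow> nat \<Rightarrow> (nat \<Rightarrow> real ^ ('m::{finite,linorder}))
    \<Rightarrow> (nat \<Rightarrow> real) \<Rightarrow> nat \<Rightarrow> real ^ ('m::{finite,linorder})" where
  "mqt_tilde alpha eta D b y 0 = 0"
| "mqt_tilde alpha eta D b y (Suc t) =
     (if t \<le> D then mqt_tilde alpha eta D b y t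
      else mqt_tilde alpha eta D b y t
        - eta *\<^sub>R (\<chi> i. (if y (t - D) \<le> b (t - D) $ i + play b (t - D) (mqt_tilde alpha eta D b y (t - D)) $ i
                          then 1 else 0) - alpha i))"

definition mqt_theta :: "('m::{finite,linorder} \<Rightarrow> real) \<Rightarrow> real \<Rightarrow> nat \<Rightarrow> (nat \<Rightarrow> real ^ ('m::{finite,linorder}))
    \<Rightarrow> (nat \<Rightarrow> real) \<Rightarrow> nat \<Rightarrow> real ^ ('m::{finite,linorder})" where
  "mqt_theta alpha eta D b y t = play b t (mqt_tilde alpha eta D b y t)"

definition regret :: "('m::{finite,linorder} \<Rightarrow> real) \<Rightarrow> (nat \<Rightarrow> real ^ ('m::{finite,linorder})) \<Rightarrow> (nat \<Rightarrow> real)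
    \<Rightarrow> (nat \<Rightarrow> real ^ ('m::{finite,linorder})) \<Rightarrow> nat \<Rightarrow> real ^ ('m::{finite,linorder}) \<Rightarrow> real" where
  "regret alpha b y th T theta =
     (1 / real T) * (\<Sum>t=1..T. rhoA alpha (b t + th t) (y t))
     - (1 / real T) * (\<Sum>t=1..T. rhoA alpha (b t + theta) (y t))"

end

theory Submission
  imports Defs
begin

lemma shift_mem: "x \<in> shift_set Kord v \<longleftrightarrow> x + v \<in> Kord"
  unfolding shift_set_def image_def by (auto intro!: bexI[of _ "x + v"])

lemma Kord_eq: "(Kord :: (real ^ ('m::{finite,linorder})) set) = (\<Inter>i. \<Inter>j. if i \<le> j then {x. x $ i \<le> x $ j} else UNIV)"
  unfolding Kord_def by auto

lemma closed_Kord: "closed (Kord :: (real ^ ('m::{finite,linorder})) set)"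
  unfolding Kord_eq
  by (intro closed_INT) (auto intro!: closed_Collect_le continuous_intros)

lemma convex_Kord: "convex (Kord :: (real ^ ('m::{finite,linorder})) set)"
  unfolding convex_def Kord_def
  by (auto intro!: add_mono mult_left_mono)

lemma shift_eq: "shift_set Kord v = (\<lambda>x. x - v) ` Kord"
  by (simp add: shift_set_def)

lemma closed_shift: "closed (shift_set Kord (v::real ^ ('m::{finite,linorder})))"
proof -
  have "shift_set Kord v = (\<lambda>x. (- v) + x) ` Kord" unfolding shift_eq by (simp add: algebra_simps)
  then show ?thesis using closed_translation[OF closed_Kord] by metis
qed

lemma convex_shift: "convex (shift_set Kord (v::real ^ ('m::{finite,linorder})))"
  unfolding shift_eq by (intro convex_translation_subtract convex_Kord)

lemma proj_dot:
  fixes v p :: "real ^ ('m::{finite,linorder})"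
  assumes "x + v \<in> Kord"
  shows "inner (p - closest_point (shift_set Kord v) p) (x - closest_point (shift_set Kord v) p) \<le> 0"
  by (rule closest_point_dot[OF convex_shift closed_shift]) (simp add: shift_mem assms)

lemma proj_in:
  fixes v p :: "real ^ ('m::{finite,linorder})"
  shows "closest_point (shift_set Kord v) p + v \<in> Kord"
proof -
  have "- v \<in> shift_set Kord v" by (simp add: shift_mem, simp add: Kord_def)
  then show ?thesis using closest_point_in_set[OF closed_shift] shift_mem by blast
qed

lemma key_proj:
  fixes v p :: "real ^ ('m::{finite,linorder})" and alpha :: "'m \<Rightarrow> real" and y :: real
  assumes mono: "mono alpha"
  defines "th \<equiv> closest_point (shift_set Kord v) p"
  shows "inner (\<chi> i. (if y \<le> v $ i + th $ i then 1 else 0) - alpha i) (th - p) \<le> 0"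
proof -
  define q where "q = th + v"
  have qK: "q \<in> Kord" unfolding q_def th_def by (rule proj_in)
  define c :: "real ^ ('m::{finite,linorder})" where "c = (\<chi> i. if y \<le> q $ i then 1 else 0)"
  define a :: "real ^ ('m::{finite,linorder})" where "a = (\<chi> i. alpha i)"
  define r where "r = p - th"
  have "(th + a) + v \<in> Kord"
    using qK mono unfolding Kord_def q_def a_def by (auto simp: mono_def) (smt (verit))
  then have ra: "inner r a \<le> 0" using proj_dot[of "th + a" v p] unfolding r_def th_def by simp
  define E where "E = {y - q $ i | i. q $ i < y} \<union> {1}"
  have finE: "finite E" unfolding E_def by simp
  have E_pos: "\<forall>e\<in>E. e > 0" unfolding E_def by auto
  define eps where "eps = Min E"
  have eps_pos: "eps > 0" unfolding eps_def using finE E_pos by (simp add: E_def)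
  have eps_le: "eps \<le> y - q $ i" if "q $ i < y" for i
    unfolding eps_def using finE that by (intro Min_le) (auto simp: E_def)
  have "(th - eps *\<^sub>R c) + v \<in> Kord"
    unfolding Kord_def
  proof (intro CollectI allI impI)
    fix i j :: 'm assume ij: "i \<le> j"
    have qij: "q $ i \<le> q $ j" using qK ij unfolding Kord_def by auto
    have "q $ i - eps * c $ i \<le> q $ j - eps * c $ j"
    proof (cases "y \<le> q $ i")
      case True then show ?thesis using qij by (simp add: c_def)
    next
      case False
      then have "eps \<le> y - q $ i" using eps_le by simp
      then show ?thesis using False qij eps_pos by (auto simp: c_def)
    qed
    then show "(th - eps *\<^sub>R c + v) $ i \<le> (th - eps *\<^sub>R c + v) $ j"
      by (simp add: q_def algebra_simps)
  qed
  then have "inner r (- eps *\<^sub>R c) \<le> 0" using proj_dot[of "th - eps *\<^sub>R c" v p] unfolding r_def th_def by simp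
  then have "eps * inner r c \<ge> 0" by simp
  then have rc: "inner r c \<ge> 0" using eps_pos by (simp add: zero_le_mult_iff)
  have "(\<chi> i. (if y \<le> v $ i + th $ i then 1 else 0) - alpha i) = c - a"
    by (simp add: c_def a_def q_def vec_eq_iff add.commute)
  moreover have "th - p = - r" by (simp add: r_def)
  ultimately show ?thesis using ra rc by (simp add: inner_diff_right inner_commute)
qed


lemma rho_alt: "rho a q y = (if q \<le> y then a * (y - q) else (1 - a) * (q - y))"
  unfolding rho_def by auto

lemma subgrad:
  assumes "0 \<le> a" "a \<le> 1"
  shows "rho a q y + ((if y \<le> q then 1 else 0) - a) * (q' - q) \<le> rho a q' y"
proof (cases "y \<le> q")
  case True
  show ?thesis
  proof (cases "q' \<le> y")
    case True
    have "(1 - a) * (q' - q) \<le> 0" using True `y \<le> q` assms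
      by (intro mult_nonneg_nonpos) auto
    moreover have "0 \<le> a * (y - q')" using True assms by simp
    ultimately have "(1 - a) * (q' - q) \<le> a * (y - q')" by linarith
    then show ?thesis using True `y \<le> q` by (auto simp: rho_alt algebra_simps)
  next
    case False
    then show ?thesis using `y \<le> q` by (auto simp: rho_alt algebra_simps)
  qed
next
  case False
  show ?thesis
  proof (cases "q' \<le> y")
    case True
    then show ?thesis using False by (auto simp: rho_alt algebra_simps)
  next
    case F2: False
    have "- a * (q' - q) \<le> 0" using F2 False assms
      by (intro mult_nonpos_nonneg) auto
    moreover have "0 \<le> (1 - a) * (q' - y)" using F2 assms by simp
    ultimately have "- a * (q' - q) \<le> (1 - a) * (q' - y)" by linarith
    then show ?thesis using F2 False by (auto simp: rho_alt algebra_simps)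
  qed
qed

lemma clip:
  assumes "\<bar>y - bb\<bar> \<le> R" "0 < a" "a < 1"
  shows "rho a (bb + max (-R) (min R x)) y \<le> rho a (bb + x) y"
proof -
  consider "x > R" | "x < -R" | "-R \<le> x \<and> x \<le> R" by linarith
  then show ?thesis
  proof cases
    case 1
    then have m: "max (-R) (min R x) = R" using assms by auto
    have "y \<le> bb + R" using assms by auto
    then show ?thesis unfolding m rho_alt using 1 assms
      by (auto intro: mult_left_mono)
  next
    case 2
    then have m: "max (-R) (min R x) = -R" using assms by auto
    have "bb - R \<le> y" using assms by auto
    then show ?thesis unfolding m rho_alt using 2 assms
      by (auto intro: mult_left_mono)
  next
    case 3
    then have "max (-R) (min R x) = x" by auto
    then show ?thesis by simp
  qed
qed

lemma inner_bound:
  fixes a c :: "real ^ ('m::{finite,linorder})"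
  assumes "\<And>i. \<bar>a $ i\<bar> \<le> 1" "\<And>i. \<bar>c $ i\<bar> \<le> 1"
  shows "\<bar>inner a c\<bar> \<le> real CARD('m)"
proof -
  have "\<bar>inner a c\<bar> \<le> (\<Sum>i\<in>UNIV. \<bar>a $ i * c $ i\<bar>)"
    unfolding inner_vec_def inner_real_def by (rule sum_abs)
  also have "\<dots> \<le> (\<Sum>i\<in>(UNIV::'m set). 1)"
    by (intro sum_mono) (simp add: abs_mult assms mult_le_one)
  finally show ?thesis by simp
qed


theorem proposition9:
  fixes alpha :: "'m::{finite,linorder} \<Rightarrow> real"
    and b :: "nat \<Rightarrow> real ^ ('m::{finite,linorder})" and y :: "nat \<Rightarrow> real"
    and R eta :: real and D T :: nat and theta :: "real ^ ('m::{finite,linorder})"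
  assumes "strict_mono alpha"
    and "\<And>i. 0 < alpha i \<and> alpha i < 1"
    and "\<And>t. t \<ge> 1 \<Longrightarrow> b t \<in> Kord"
    and "\<And>t i. t \<ge> 1 \<Longrightarrow> \<bar>y t - b t $ i\<bar> \<le> R"
    and "eta > 0"
    and "T \<ge> 1"
    and "theta \<in> (\<Inter>t\<in>{1..T+D+1}. shift_set Kord (b t))"
  shows "(regret alpha b y (mqt_theta alpha eta D b y) T theta
           \<le> R\<^sup>2 * real CARD('m) / (2 * eta * real T) + 2 * eta * real CARD('m) * real (D + 1))
         \<and> (eta = R / 2 * sqrt (1 / (real (D + 1) * real T)) \<longrightarrow>
         regret alpha b y (mqt_theta alpha eta D b y) T theta
           \<le> 2 * R * real CARD('m) * sqrt (real (D + 1)) / sqrt (real T))"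
proof -
  note mono = strict_mono_mono[OF assms(1)]
  define m where "m = real CARD('m)"
  have R0: "0 \<le> R" using assms(4)[of 1] by (meson abs_ge_zero order_trans order_refl)
  define th where "th t = mqt_tilde alpha eta D b y t" for t
  define pl where "pl t = mqt_theta alpha eta D b y t" for t
  define g :: "nat \<Rightarrow> real ^ ('m::{finite,linorder})" where
    "g t = (\<chi> i. (if y t \<le> b t $ i + pl t $ i then 1 else 0) - alpha i)" for t
  have pl_eq: "pl t = closest_point (shift_set Kord (b t)) (th t)" for t
    by (simp add: pl_def th_def mqt_theta_def play_def)
  have rec: "th (Suc t) = (if t \<le> D then th t else th t - eta *\<^sub>R g (t - D))" for t
    by (simp add: th_def g_def pl_def mqt_theta_def)
  define z where "z t = - eta *\<^sub>R (\<Sum>s\<in>{1..<t}. g s)" for t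
  have z_Suc: "z (Suc t) = z t - eta *\<^sub>R g t" if "t \<ge> 1" for t
    using that by (simp add: z_def algebra_simps)
  have th_z: "th t = z (t - D)" for t
  proof (induction t)
    case 0
    then show ?case by (simp add: th_def z_def)
  next
    case (Suc t)
    show ?case
    proof (cases "t \<le> D")
      case True
      then have "Suc t - D \<le> 1" "t - D = 0" by auto
      then have "z (Suc t - D) = 0" "z (t - D) = 0" by (auto simp: z_def)
      then show ?thesis using rec[of t] True Suc by simp
    next
      case False
      then have "Suc t - D = Suc (t - D)" "t - D \<ge> 1" by auto
      then show ?thesis using rec[of t] False Suc z_Suc by simp
    qed
  qed
  have g_bd: "\<bar>g t $ i\<bar> \<le> 1" for t i
    using assms(2)[of i] by (simp add: g_def)
  have gg: "\<bar>inner (g t) (g s)\<bar> \<le> m" for t s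
    unfolding m_def by (rule inner_bound) (auto simp: g_bd)
  have gnorm: "norm (g t)^2 \<le> m" for t
    using gg[of t t] by (simp add: power2_norm_eq_inner)
  define u :: "real ^ ('m::{finite,linorder})" where "u = (\<chi> i. max (-R) (min R (theta $ i)))"
  have u_norm: "norm u ^ 2 \<le> R^2 * m"
  proof -
    have "norm u ^ 2 = (\<Sum>i\<in>UNIV. (u $ i)^2)"
      unfolding power2_norm_eq_inner inner_vec_def by (simp add: power2_eq_square)
    also have "\<dots> \<le> (\<Sum>i\<in>(UNIV::('m::{finite,linorder}) set). R^2)"
    proof (intro sum_mono)
      fix i
      have "\<bar>u $ i\<bar> \<le> \<bar>R\<bar>" using R0 by (simp add: u_def)
      then show "(u $ i)^2 \<le> R^2" by (simp add: abs_le_square_iff)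
    qed
    finally show ?thesis by (simp add: m_def mult.commute)
  qed
  have clip_t: "rhoA alpha (b t + u) (y t) \<le> rhoA alpha (b t + theta) (y t)" if "t \<ge> 1" for t
    unfolding rhoA_def using that assms(2,4)
    by (intro sum_mono) (simp add: u_def clip)
  have sg_t: "rhoA alpha (b t + pl t) (y t) - rhoA alpha (b t + u) (y t) \<le> inner (g t) (pl t - u)" for t
  proof -
    have "rhoA alpha (b t + pl t) (y t) + inner (g t) (u - pl t) \<le> rhoA alpha (b t + u) (y t)"
      unfolding rhoA_def inner_vec_def inner_real_def sum.distrib[symmetric]
    proof (intro sum_mono)
      fix i
      have a01: "0 \<le> alpha i" "alpha i \<le> 1" using assms(2)[of i] by auto
      have e: "(b t + u) $ i - (b t + pl t) $ i = (u - pl t) $ i" by simp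
      have "rho (alpha i) ((b t + pl t) $ i) (y t) + ((if y t \<le> (b t + pl t) $ i then 1 else 0) - alpha i) * ((b t + u) $ i - (b t + pl t) $ i) \<le> rho (alpha i) ((b t + u) $ i) (y t)"
        by (rule subgrad[OF a01])
      then show "rho (alpha i) ((b t + pl t) $ i) (y t) + g t $ i * (u - pl t) $ i \<le> rho (alpha i) ((b t + u) $ i) (y t)"
        unfolding e by (simp add: g_def)
    qed
    then show ?thesis by (simp add: inner_diff_right)
  qed
  have proj_t: "inner (g t) (pl t - th t) \<le> 0" for t
    unfolding pl_eq g_def using key_proj[OF mono, where v="b t" and p="th t" and y="y t"] pl_eq
    by simp
  have delay_t: "inner (g t) (th t - z t) \<le> eta * D * m" for t
  proof -
    define A where "A = {1..<t} - {1..<t - D}"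
    have "th t - z t = eta *\<^sub>R (\<Sum>s\<in>A. g s)"
      unfolding th_z z_def A_def
      by (simp add: sum_diff algebra_simps scaleR_diff_right)
    then have "inner (g t) (th t - z t) = eta * (\<Sum>s\<in>A. inner (g t) (g s))"
      by (simp add: inner_sum_right)
    also have "\<dots> \<le> eta * (\<Sum>s\<in>A. m)"
      using assms(5) gg by (intro mult_left_mono sum_mono) (auto simp: abs_le_iff)
    also have "\<dots> = eta * card A * m" by simp
    also have "\<dots> \<le> eta * D * m"
    proof -
      have "A \<subseteq> {t - D..<t}" unfolding A_def by auto
      then have "card A \<le> D" using card_mono[of "{t - D..<t}" A] by simp
      then show ?thesis using assms(5) by (simp add: m_def mult_right_mono)
    qed
    finally show ?thesis .
  qed
  have ogd: "(\<Sum>t=1..n. inner (g t) (z t - u)) \<le> (norm u ^ 2 - norm (z (n+1) - u)^2) / (2 * eta) + eta * m * n / 2" for n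
  proof (induction n)
    case 0
    then show ?case by (simp add: z_def)
  next
    case (Suc n)
    have zs: "z (Suc n + 1) - u = (z (n+1) - u) - eta *\<^sub>R g (Suc n)"
      using z_Suc[of "Suc n"] by simp
    have "norm (z (Suc n + 1) - u)^2 = norm (z (n+1) - u)^2 - 2 * eta * inner (g (Suc n)) (z (Suc n) - u) + eta^2 * norm (g (Suc n))^2"
    proof -
      have gen: "norm (w - eta *\<^sub>R gv)^2 = norm w^2 - 2 * eta * inner gv w + eta^2 * norm gv^2"
        for w gv :: "real ^ ('m::{finite,linorder})"
        unfolding power2_norm_eq_inner
        by (simp add: inner_diff_left inner_diff_right inner_commute power2_eq_square algebra_simps)
      show ?thesis unfolding zs gen by simp
    qed
    then have "inner (g (Suc n)) (z (Suc n) - u) = (norm (z (n+1) - u)^2 - norm (z (Suc n + 1) - u)^2) / (2 * eta) + eta / 2 * norm (g (Suc n))^2"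
      using assms(5) by (simp add: field_simps power2_eq_square)
    also have "\<dots> \<le> (norm (z (n+1) - u)^2 - norm (z (Suc n + 1) - u)^2) / (2 * eta) + eta / 2 * m"
      using gnorm assms(5) by (intro add_left_mono mult_left_mono) auto
    finally have step: "inner (g (Suc n)) (z (Suc n) - u) \<le> (norm (z (n+1) - u)^2 - norm (z (Suc n + 1) - u)^2) / (2 * eta) + eta / 2 * m" .
    have "(\<Sum>t=1..Suc n. inner (g t) (z t - u)) = (\<Sum>t=1..n. inner (g t) (z t - u)) + inner (g (Suc n)) (z (Suc n) - u)"
      by simp
    also have "\<dots> \<le> (norm u ^ 2 - norm (z (n+1) - u)^2) / (2 * eta) + eta * m * n / 2
        + ((norm (z (n+1) - u)^2 - norm (z (Suc n + 1) - u)^2) / (2 * eta) + eta / 2 * m)"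
      using Suc.IH step by linarith
    also have "\<dots> = (norm u ^ 2 - norm (z (Suc n + 1) - u)^2) / (2 * eta) + eta * m * real (Suc n) / 2"
      using assms(5) by (simp add: field_simps)
    finally show ?case .
  qed
  have tot: "(\<Sum>t=1..T. rhoA alpha (b t + pl t) (y t)) - (\<Sum>t=1..T. rhoA alpha (b t + theta) (y t))
      \<le> R^2 * m / (2 * eta) + 2 * eta * m * (D + 1) * T"
  proof -
    have "(\<Sum>t=1..T. rhoA alpha (b t + pl t) (y t)) - (\<Sum>t=1..T. rhoA alpha (b t + theta) (y t))
        \<le> (\<Sum>t=1..T. rhoA alpha (b t + pl t) (y t) - rhoA alpha (b t + u) (y t))"
      using clip_t by (simp add: sum_subtractf[symmetric]) (intro sum_mono, auto simp: algebra_simps)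
    also have "\<dots> \<le> (\<Sum>t=1..T. inner (g t) (z t - u) + eta * D * m)"
    proof (intro sum_mono)
      fix t
      have "pl t - u = (pl t - th t) + (th t - z t) + (z t - u)" by simp
      then have "inner (g t) (pl t - u) = inner (g t) (pl t - th t) + inner (g t) (th t - z t) + inner (g t) (z t - u)"
        by (simp add: inner_diff_right)
      then show "rhoA alpha (b t + pl t) (y t) - rhoA alpha (b t + u) (y t) \<le> inner (g t) (z t - u) + eta * D * m"
        using sg_t[of t] proj_t[of t] delay_t[of t] by linarith
    qed
    also have "\<dots> = (\<Sum>t=1..T. inner (g t) (z t - u)) + eta * D * m * T"
      by (simp add: sum.distrib)
    also have "\<dots> \<le> norm u ^ 2 / (2 * eta) + eta * m * T / 2 + eta * D * m * T"
    proof -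
      have "(norm u ^ 2 - norm (z (T+1) - u)^2) / (2 * eta) \<le> norm u ^ 2 / (2 * eta)"
        using assms(5) by (simp add: divide_right_mono)
      then show ?thesis using ogd[of T] by linarith
    qed
    also have "\<dots> \<le> R^2 * m / (2 * eta) + 2 * eta * m * (D + 1) * T"
    proof -
      have "norm u ^ 2 / (2 * eta) \<le> R^2 * m / (2 * eta)"
        using u_norm assms(5) by (simp add: divide_right_mono)
      moreover have "eta * m * T / 2 + eta * D * m * T \<le> 2 * eta * m * (D + 1) * T"
        using assms(5) by (simp add: m_def algebra_simps mult_nonneg_nonneg)
      ultimately show ?thesis by linarith
    qed
    finally show ?thesis .
  qed
  have T0: "real T > 0" using assms(6) by simp
  have part1: "regret alpha b y (mqt_theta alpha eta D b y) T theta
           \<le> R\<^sup>2 * real CARD('m) / (2 * eta * real T) + 2 * eta * real CARD('m) * real (D + 1)"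
  proof -
    have "regret alpha b y (mqt_theta alpha eta D b y) T theta
        = ((\<Sum>t=1..T. rhoA alpha (b t + pl t) (y t)) - (\<Sum>t=1..T. rhoA alpha (b t + theta) (y t))) / T"
      unfolding regret_def pl_def by (simp add: diff_divide_distrib)
    also have "\<dots> \<le> (R^2 * m / (2 * eta) + 2 * eta * m * (D + 1) * T) / T"
      using tot T0 by (simp add: divide_right_mono)
    also have "\<dots> = R\<^sup>2 * real CARD('m) / (2 * eta * real T) + 2 * eta * real CARD('m) * real (D + 1)"
      using T0 by (simp add: m_def field_simps)
    finally show ?thesis .
  qed
  show ?thesis
  proof (intro conjI impI part1)
    assume eta_eq: "eta = R / 2 * sqrt (1 / (real (D + 1) * real T))"
    define s where "s = sqrt (real (D + 1))"
    define r where "r = sqrt (real T)"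
    have s0: "s > 0" and r0: "r > 0" using T0 by (auto simp: s_def r_def)
    have ss: "s^2 = real (D+1)" and rr: "r^2 = real T" using T0 by (auto simp: s_def r_def)
    have eta2: "eta = R / (2 * s * r)"
      unfolding eta_eq s_def r_def by (simp add: real_sqrt_divide real_sqrt_mult)
    have R_pos: "R > 0" using assms(5) eta2 s0 r0 by (auto simp: zero_less_divide_iff) (meson mult_pos_pos not_less_iff_gr_or_eq)
    have "R\<^sup>2 * m / (2 * eta * real T) + 2 * eta * m * real (D + 1) = 2 * R * m * s / r"
      unfolding eta2 ss[symmetric] rr[symmetric] using s0 r0 R_pos
      by (simp add: field_simps power2_eq_square)
    then show "regret alpha b y (mqt_theta alpha eta D b y) T theta
           \<le> 2 * R * real CARD('m) * sqrt (real (D + 1)) / sqrt (real T)"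
      using part1 by (simp add: m_def s_def r_def)
  qed
qed

end
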